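(* Let $(V,b,\mu)$ be a locally finite, weighted, connected graph with $\mu(x)\geq\mu_0$ for all $x\in V$, for some constant $\mu_0>0$, and let $\theta$ be a phase function on it. Fix $x_0\in V$ and, for $n\in\mathbb{Z}_+$, let $\beta_n=\frac{d_{2n}p_{2n}}{\mu_0 n}$ and let $\chi_n$ be the cut-off function defined below. Let $q\colon[0,\infty)\to(0,\infty)$ be non-decreasing with $q(s)=O(s^\alpha)$ for some $0\leq\alpha\leq1$, and let $W\colon V\to\mathbb{R}$ satisfy $W(x)\geq -q(r(x))$ for all $x\in V$. Let $H u=\Delta_{b,\theta}^2u+Wu$. Assume there exist numbers $0<C_1<1$ and $N_1\in\mathbb{Z}_+$ such that $\beta_n\leq C_1$ for all $n\geq N_1$. Assume that $u\in\mathrm{Dom}(H_{\max})$ satisfies $(H-\lambda i)u=0$ for some $\lambda\in\mathbb{R}$. Then there exists a constant $C$ independent of $n$ such that for all $n\geq N_1$, $$\|\Delta_{b,\theta}(\chi_nu)\|^2\leq C\left[\beta_n\|u\|^2+((q\circ r)\chi_nu,\chi_nu)\right].$$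
   Context: $V$ is a countably infinite set, $\mu\colon V\to(0,\infty)$, and $b\colon V\times V\to[0,\infty)$ satisfies $b(x,y)=b(y,x)$, $b(x,x)=0$, $\deg(x):=\#\{y: b(x,y)>0\}<\infty$; $x\sim y$ means $b(x,y)>0$; connectedness means any two vertices are joined by a finite path of neighbors, and $d(x,y)$ is the combinatorial (path-length) distance; $r(x)=d(x_0,x)$. A phase function is $\theta\colon V\times V\to[-\pi,\pi]$ with $\theta(x,y)=-\theta(y,x)$. $\ell^2(V,\mu)$ is the space of $f\colon V\to\mathbb{C}$ with $\|f\|^2=\sum_x\mu(x)|f(x)|^2<\infty$, inner product $(f,g)=\sum_x\mu(x)f(x)\overline{g(x)}$. The magnetic Laplacian is $(\Delta_{b,\theta}u)(x)=\frac{1}{\mu(x)}\sum_{y}b(x,y)(u(x)-e^{i\theta(x,y)}u(y))$, and $\Delta_{b,\theta}^2u=\Delta_{b,\theta}(\Delta_{b,\theta}u)$. $\mathrm{Dom}(H_{\max})=\{u\in\ell^2(V,\mu): Hu\in\ell^2(V,\mu)\}$. $B(x_0,n)=\{x: r(x)\leq n\}$ (plus edges between such vertices), $d_n=\max_{x\in B(x_0,n)}\deg(x)$, $p_n=\max_{x\in B(x_0,n)}\max_{y\in V}b(x,y)$. The cut-off is $\chi_n(x)=\left(\left(\frac{2n-d(x_0,x)}{n}\right)\vee 0\right)\wedge 1$, where $a\wedge z=\min\{a,z\}$, $a\vee z=\max\{a,z\}$. $(q\circ r)$ is the composition $x\mapsto q(r(x))$. *)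

theory Defs
  imports "HOL-Analysis.Analysis" "HOL-Library.Landau_Symbols"
begin

definition edges :: "('v \<Rightarrow> 'v \<Rightarrow> real) \<Rightarrow> ('v \<times> 'v) set" where
  "edges b = {(x, y). b x y > 0}"

definition neighbours :: "('v \<Rightarrow> 'v \<Rightarrow> real) \<Rightarrow> 'v \<Rightarrow> 'v set" where
  "neighbours b x = {y. b x y > 0}"

definition deg :: "('v \<Rightarrow> 'v \<Rightarrow> real) \<Rightarrow> 'v \<Rightarrow> nat" where
  "deg b x = card (neighbours b x)"

text \<open>Locally finite weighted graph on the whole type 'v (vertex set V = UNIV).\<close>
definition weighted_graph :: "('v \<Rightarrow> 'v \<Rightarrow> real) \<Rightarrow> bool" where
  "weighted_graph b \<longleftrightarrow>
     (\<forall>x y. b x y \<ge> 0) \<and> (\<forall>x y. b x y = b y x) \<and> (\<forall>x. b x x = 0)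
     \<and> (\<forall>x. finite (neighbours b x))"

definition graph_connected :: "('v \<Rightarrow> 'v \<Rightarrow> real) \<Rightarrow> bool" where
  "graph_connected b \<longleftrightarrow> (\<forall>x y. (x, y) \<in> (edges b)\<^sup>*)"

definition gdist :: "('v \<Rightarrow> 'v \<Rightarrow> real) \<Rightarrow> 'v \<Rightarrow> 'v \<Rightarrow> nat" where
  "gdist b x y = (LEAST n. (x, y) \<in> (edges b) ^^ n)"

definition phase_function :: "('v \<Rightarrow> 'v \<Rightarrow> real) \<Rightarrow> bool" where
  "phase_function \<theta> \<longleftrightarrow> (\<forall>x y. -pi \<le> \<theta> x y \<and> \<theta> x y \<le> pi \<and> \<theta> x y = - \<theta> y x)"

definition ball_comb :: "('v \<Rightarrow> 'v \<Rightarrow> real) \<Rightarrow> 'v \<Rightarrow> nat \<Rightarrow> 'v set" where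
  "ball_comb b x0 n = {x. gdist b x0 x \<le> n}"

definition dmax :: "('v \<Rightarrow> 'v \<Rightarrow> real) \<Rightarrow> 'v \<Rightarrow> nat \<Rightarrow> nat" where
  "dmax b x0 n = Max (deg b ` ball_comb b x0 n)"

definition pmax :: "('v \<Rightarrow> 'v \<Rightarrow> real) \<Rightarrow> 'v \<Rightarrow> nat \<Rightarrow> real" where
  "pmax b x0 n = Max {b x y | x y. x \<in> ball_comb b x0 n}"

definition beta :: "('v \<Rightarrow> 'v \<Rightarrow> real) \<Rightarrow> real \<Rightarrow> 'v \<Rightarrow> nat \<Rightarrow> real" where
  "beta b \<mu>0 x0 n = real (dmax b x0 (2*n)) * pmax b x0 (2*n) / (\<mu>0 * real n)"

definition cutoff :: "('v \<Rightarrow> 'v \<Rightarrow> real) \<Rightarrow> 'v \<Rightarrow> nat \<Rightarrow> 'v \<Rightarrow> real" where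
  "cutoff b x0 n x = min (max ((2 * real n - real (gdist b x0 x)) / real n) 0) 1"

definition mag_lap ::
  "('v \<Rightarrow> 'v \<Rightarrow> real) \<Rightarrow> ('v \<Rightarrow> 'v \<Rightarrow> real) \<Rightarrow> ('v \<Rightarrow> real) \<Rightarrow> ('v \<Rightarrow> complex) \<Rightarrow> 'v \<Rightarrow> complex" where
  "mag_lap b \<theta> \<mu> u x =
     (1 / complex_of_real (\<mu> x)) *
     (\<Sum>y\<in>neighbours b x. complex_of_real (b x y) * (u x - exp (\<i> * complex_of_real (\<theta> x y)) * u y))"

definition in_l2 :: "('v \<Rightarrow> real) \<Rightarrow> ('v \<Rightarrow> complex) \<Rightarrow> bool" where
  "in_l2 \<mu> f \<longleftrightarrow> (\<lambda>x. \<mu> x * (cmod (f x))\<^sup>2) summable_on UNIV"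

definition l2_norm_sq :: "('v \<Rightarrow> real) \<Rightarrow> ('v \<Rightarrow> complex) \<Rightarrow> real" where
  "l2_norm_sq \<mu> f = (\<Sum>\<^sub>\<infinity>x. \<mu> x * (cmod (f x))\<^sup>2)"

definition l2_inner :: "('v \<Rightarrow> real) \<Rightarrow> ('v \<Rightarrow> complex) \<Rightarrow> ('v \<Rightarrow> complex) \<Rightarrow> complex" where
  "l2_inner \<mu> f g = (\<Sum>\<^sub>\<infinity>x. complex_of_real (\<mu> x) * f x * cnj (g x))"

end

theory Submission
  imports Defs
begin

locale gsetting =
  fixes b :: "'v \<Rightarrow> 'v \<Rightarrow> real" and x0 :: 'v
  assumes graph: "weighted_graph b" and conn: "graph_connected b"
begin

abbreviation "N \<equiv> neighbours b"
abbreviation "r \<equiv> gdist b x0"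
abbreviation "B \<equiv> ball_comb b x0"

lemma b_nonneg: "b x y \<ge> 0" using graph by (simp add: weighted_graph_def)
lemma b_sym: "b x y = b y x" using graph by (simp add: weighted_graph_def)
lemma N_finite: "finite (N x)" using graph by (simp add: weighted_graph_def)
lemma N_iff: "y \<in> N x \<longleftrightarrow> b x y > 0" by (simp add: neighbours_def)
lemma b_zero: "y \<notin> N x \<Longrightarrow> b x y = 0"
  using b_nonneg[of x y] by (simp add: neighbours_def)

lemma path: "(x0, x) \<in> edges b ^^ r x"
proof -
  have "(x0, x) \<in> (edges b)\<^sup>*" using conn by (simp add: graph_connected_def)
  then obtain n where "(x0, x) \<in> edges b ^^ n" using rtrancl_power by blast
  then show ?thesis unfolding gdist_def by (rule LeastI)
qed

lemma r_step: assumes "b x y > 0" shows "r y \<le> Suc (r x)"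
proof -
  have "(x0, y) \<in> edges b ^^ Suc (r x)"
    using path[of x] assms by (auto simp: edges_def)
  then show ?thesis unfolding gdist_def by (rule Least_le)
qed

lemma r_step': assumes "b x y > 0" shows "r x \<le> Suc (r y)"
  using r_step[of y x] assms b_sym[of x y] by simp

lemma B_Suc: "B (Suc k) \<subseteq> B k \<union> (\<Union>x\<in>B k. N x)"
proof
  fix y assume y: "y \<in> B (Suc k)"
  show "y \<in> B k \<union> (\<Union>x\<in>B k. N x)"
  proof (cases "r y \<le> k")
    case True then show ?thesis by (simp add: ball_comb_def)
  next
    case False
    then have "r y = Suc k" using y by (simp add: ball_comb_def)
    then have "(x0, y) \<in> edges b ^^ k O edges b" using path[of y] by simp
    then obtain x where x: "(x0, x) \<in> edges b ^^ k" "(x, y) \<in> edges b" by blast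
    have "r x \<le> k" unfolding gdist_def by (rule Least_le) (rule x(1))
    then show ?thesis using x(2) by (auto simp: ball_comb_def edges_def neighbours_def)
  qed
qed

lemma B_finite: "finite (B k)"
proof (induction k)
  case 0
  have "B 0 \<subseteq> {x0}"
  proof
    fix x assume "x \<in> B 0"
    then have "r x = 0" by (simp add: ball_comb_def)
    then show "x \<in> {x0}" using path[of x] by simp
  qed
  then show ?case using finite_subset by blast
next
  case (Suc k)
  then show ?case using B_Suc[of k] N_finite by (meson finite_UN_I finite_Un finite_subset)
qed

lemma N_sub: "x \<in> B k \<Longrightarrow> N x \<subseteq> B (Suc k)"
  using r_step by (fastforce simp: ball_comb_def N_iff)

lemma deg_le: "x \<in> B k \<Longrightarrow> deg b x \<le> dmax b x0 k"
  unfolding dmax_def using B_finite by auto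

lemma pset_finite: "finite {b x y | x y. x \<in> B k}"
proof -
  have "{b x y | x y. x \<in> B k} \<subseteq> insert 0 (\<Union>x\<in>B k. b x ` N x)"
    using b_zero by auto
  then show ?thesis using B_finite N_finite by (meson finite_UN_I finite_imageI finite_insert finite_subset)
qed

lemma b_le_pmax: "x \<in> B k \<Longrightarrow> b x y \<le> pmax b x0 k"
  unfolding pmax_def using pset_finite by (intro Max_ge) auto

lemma x0_B: "x0 \<in> B k"
proof -
  have "r x0 = 0" unfolding gdist_def by (rule Least_eq_0) simp
  then show ?thesis by (simp add: ball_comb_def)
qed

lemma pmax_nonneg: "pmax b x0 k \<ge> 0"
  using b_le_pmax[OF x0_B[of k], of x0] b_nonneg[of x0 x0] by linarith

lemma wsum: assumes "x \<in> B k" "finite F"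
  shows "(\<Sum>y\<in>F. b x y) \<le> real (dmax b x0 k) * pmax b x0 k"
proof -
  have "(\<Sum>y\<in>F. b x y) = (\<Sum>y\<in>F \<inter> N x. b x y)"
    using assms(2) by (intro sum.mono_neutral_right) (auto simp: b_zero)
  also have "\<dots> \<le> (\<Sum>y\<in>N x. b x y)"
    using N_finite b_nonneg by (intro sum_mono2) auto
  also have "\<dots> \<le> (\<Sum>y\<in>N x. pmax b x0 k)"
    using b_le_pmax[OF assms(1)] by (intro sum_mono) auto
  also have "\<dots> = real (deg b x) * pmax b x0 k" by (simp add: deg_def)
  also have "\<dots> \<le> real (dmax b x0 k) * pmax b x0 k"
    using deg_le[OF assms(1)] pmax_nonneg by (intro mult_right_mono) auto
  finally show ?thesis .
qed

end

lemma cut_lip: fixes n::nat and s t :: real assumes "n \<ge> 1"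
  shows "\<bar>min (max ((2 * real n - s) / real n) 0) 1 - min (max ((2 * real n - t) / real n) 0) 1\<bar> \<le> \<bar>s - t\<bar> / real n"
proof -
  have np: "real n > 0" using assms by simp
  have "\<bar>min (max a 0) 1 - min (max c 0) 1\<bar> \<le> \<bar>a - c\<bar>" for a c :: real
    by (auto simp: min_def max_def)
  moreover have "\<bar>(2 * real n - s) / real n - (2 * real n - t) / real n\<bar> = \<bar>s - t\<bar> / real n"
    using np by (simp add: diff_divide_distrib[symmetric] abs_divide)
  ultimately show ?thesis by (metis)
qed

lemma sum_cong_sets:
  fixes G :: "'a \<Rightarrow> 'b::comm_monoid_add"
  assumes "finite A" "finite C" "\<And>y. y \<in> A - C \<Longrightarrow> G y = 0" "\<And>y. y \<in> C - A \<Longrightarrow> G y = 0"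
  shows "sum G A = sum G C"
proof -
  have "sum G A = sum G (A \<inter> C)" using assms by (intro sum.mono_neutral_right) auto
  also have "\<dots> = sum G C" using assms by (intro sum.mono_neutral_left) auto
  finally show ?thesis .
qed

lemma wCS:
  fixes w a :: "'a \<Rightarrow> real"
  assumes "\<And>i. i \<in> I \<Longrightarrow> w i \<ge> 0"
  shows "(\<Sum>i\<in>I. w i * a i)^2 \<le> (\<Sum>i\<in>I. w i) * (\<Sum>i\<in>I. w i * (a i)^2)"
proof -
  have "(\<Sum>i\<in>I. w i * a i)^2 = (\<Sum>i\<in>I. sqrt (w i) * (sqrt (w i) * a i))^2"
    using assms by (intro arg_cong[where f="\<lambda>z. z^2"] sum.cong) (auto simp: real_sqrt_mult_self mult.assoc[symmetric])
  also have "\<dots> \<le> (\<Sum>i\<in>I. (sqrt (w i))^2) * (\<Sum>i\<in>I. (sqrt (w i) * a i)^2)"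
    by (rule Cauchy_Schwarz_ineq_sum)
  also have "\<dots> = (\<Sum>i\<in>I. w i) * (\<Sum>i\<in>I. w i * (a i)^2)"
    using assms by (intro arg_cong2[where f="(*)"] sum.cong) (auto simp: power_mult_distrib)
  finally show ?thesis .
qed

context gsetting begin

lemma nsum:
  fixes G :: "'v \<Rightarrow> 'b::{comm_ring_1, real_algebra_1}"
  assumes "finite F" "N x \<subseteq> F"
  shows "(\<Sum>y\<in>N x. of_real (b x y) * G y) = (\<Sum>y\<in>F. of_real (b x y) * G y)"
  using assms N_finite by (intro sum_cong_sets) (auto simp: b_zero)

lemma nsum_real:
  assumes "finite F" "N x \<subseteq> F"
  shows "(\<Sum>y\<in>N x. b x y * G y) = (\<Sum>y\<in>F. b x y * G y)"
  using assms N_finite by (intro sum_cong_sets) (auto simp: b_zero)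

end

locale msetting = gsetting b x0 for b :: "'v \<Rightarrow> 'v \<Rightarrow> real" and x0 +
  fixes \<theta> :: "'v \<Rightarrow> 'v \<Rightarrow> real" and \<mu> :: "'v \<Rightarrow> real" and \<mu>0 :: real
  assumes mu0_pos: "\<mu>0 > 0" and mu_ge: "\<And>x. \<mu> x \<ge> \<mu>0"
    and phase: "phase_function \<theta>"
begin

abbreviation "L \<equiv> mag_lap b \<theta> \<mu>"
definition "e x y = exp (\<i> * complex_of_real (\<theta> x y))"

lemma mu_pos: "\<mu> x > 0" using mu0_pos mu_ge[of x] by linarith
lemma e_cnj: "cnj (e x y) = e y x"
proof -
  have h: "\<theta> y x = - \<theta> x y" using phase unfolding phase_function_def by (metis minus_minus)
  show ?thesis by (simp add: e_def exp_cnj h)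
qed
lemma e_norm: "cmod (e x y) = 1" by (simp add: e_def)

lemma L_alt: "of_real (\<mu> x) * L f x = (\<Sum>y\<in>N x. of_real (b x y) * (f x - e x y * f y))"
  using mu_pos[of x] by (simp add: mag_lap_def e_def)

lemma L_alt': "L f x = (1 / of_real (\<mu> x)) * (\<Sum>y\<in>N x. of_real (b x y) * (f x - e x y * f y))"
  by (simp add: mag_lap_def e_def)

end

context msetting begin
lemma green:
  assumes S: "finite S" and S': "finite S'" and T: "finite T"
    and SS': "S \<subseteq> S'" and S'T: "S' \<subseteq> T"
    and NS: "\<And>x. x \<in> S \<Longrightarrow> N x \<subseteq> S'" and NT: "\<And>x. x \<in> S' \<Longrightarrow> N x \<subseteq> T"
    and g0: "\<And>x. x \<notin> S \<Longrightarrow> g x = 0"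
  shows "(\<Sum>x\<in>S'. of_real (\<mu> x) * f x * cnj (L g x)) = (\<Sum>x\<in>S. of_real (\<mu> x) * L f x * cnj (g x))"
proof -
  have NT': "x \<in> S \<Longrightarrow> N x \<subseteq> T" for x using NS NT SS' by blast
  have "(\<Sum>x\<in>S'. of_real (\<mu> x) * f x * cnj (L g x)) = (\<Sum>x\<in>S'. f x * cnj (of_real (\<mu> x) * L g x))"
    by (simp add: mult_ac)
  also have "\<dots> = (\<Sum>x\<in>S'. f x * cnj (\<Sum>y\<in>T. of_real (b x y) * (g x - e x y * g y)))"
    using NT T by (simp add: L_alt nsum)
  also have "\<dots> = (\<Sum>x\<in>S'. \<Sum>y\<in>T. of_real (b x y) * f x * cnj (g x))
      - (\<Sum>x\<in>S'. \<Sum>y\<in>T. of_real (b x y) * f x * e y x * cnj (g y))"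
    unfolding sum_subtractf[symmetric]
  proof (intro sum.cong refl)
    fix x
    have "f x * cnj (\<Sum>y\<in>T. of_real (b x y) * (g x - e x y * g y)) = (\<Sum>y\<in>T. f x * cnj (of_real (b x y) * (g x - e x y * g y)))"
      by (simp add: cnj_sum sum_distrib_left)
    also have "\<dots> = (\<Sum>y\<in>T. of_real (b x y) * f x * cnj (g x) - of_real (b x y) * f x * e y x * cnj (g y))"
      by (intro sum.cong refl) (simp add: e_cnj algebra_simps)
    finally show "f x * cnj (\<Sum>y\<in>T. of_real (b x y) * (g x - e x y * g y)) = (\<Sum>y\<in>T. of_real (b x y) * f x * cnj (g x) - of_real (b x y) * f x * e y x * cnj (g y))" .
  qed
  also have "(\<Sum>x\<in>S'. \<Sum>y\<in>T. of_real (b x y) * f x * cnj (g x)) = (\<Sum>x\<in>S. \<Sum>y\<in>T. of_real (b x y) * f x * cnj (g x))"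
    using S S' SS' g0 by (intro sum.mono_neutral_right) auto
  also have "(\<Sum>x\<in>S'. \<Sum>y\<in>T. of_real (b x y) * f x * e y x * cnj (g y)) = (\<Sum>x\<in>S'. \<Sum>y\<in>S. of_real (b x y) * f x * e y x * cnj (g y))"
    using S T SS' S'T g0 by (intro sum.cong refl sum.mono_neutral_right) auto
  also have "\<dots> = (\<Sum>y\<in>S. \<Sum>x\<in>S'. of_real (b x y) * f x * e y x * cnj (g y))"
    by (rule sum.swap)
  also have "\<dots> = (\<Sum>y\<in>S. \<Sum>x\<in>T. of_real (b y x) * (e y x * f x * cnj (g y)))"
  proof (rule sum.cong[OF refl])
    fix y assume y: "y \<in> S"
    have "(\<Sum>x\<in>S'. of_real (b x y) * f x * e y x * cnj (g y)) = (\<Sum>x\<in>S'. of_real (b y x) * (e y x * f x * cnj (g y)))"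
      by (simp add: b_sym[of y] algebra_simps)
    also have "\<dots> = (\<Sum>x\<in>N y. of_real (b y x) * (e y x * f x * cnj (g y)))"
      by (rule nsum[OF S' NS[OF y], symmetric])
    also have "\<dots> = (\<Sum>x\<in>T. of_real (b y x) * (e y x * f x * cnj (g y)))"
      by (rule nsum[OF T NT'[OF y]])
    finally show "(\<Sum>x\<in>S'. of_real (b x y) * f x * e y x * cnj (g y)) = (\<Sum>x\<in>T. of_real (b y x) * (e y x * f x * cnj (g y)))" .
  qed
  also have "(\<Sum>x\<in>S. \<Sum>y\<in>T. of_real (b x y) * f x * cnj (g x)) - (\<Sum>y\<in>S. \<Sum>x\<in>T. of_real (b y x) * (e y x * f x * cnj (g y)))
     = (\<Sum>x\<in>S. (\<Sum>y\<in>T. of_real (b x y) * (f x - e x y * f y)) * cnj (g x))"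
    unfolding sum_subtractf[symmetric]
  proof (intro sum.cong refl)
    fix x
    show "(\<Sum>y\<in>T. of_real (b x y) * f x * cnj (g x) - of_real (b x y) * (e x y * f y * cnj (g x)))
       = (\<Sum>y\<in>T. of_real (b x y) * (f x - e x y * f y)) * cnj (g x)"
      unfolding sum_distrib_right
      by (intro sum.cong refl) (simp add: algebra_simps)
  qed
  also have "\<dots> = (\<Sum>x\<in>S. of_real (\<mu> x) * L f x * cnj (g x))"
    using NT' T by (simp add: L_alt nsum)
  finally show ?thesis .
qed

end

locale nsetting = msetting b x0 \<theta> \<mu> \<mu>0 for b :: "'v \<Rightarrow> 'v \<Rightarrow> real" and x0 \<theta> \<mu> \<mu>0 +
  fixes n :: nat
  assumes n_ge: "n \<ge> 1"
begin

abbreviation "ch \<equiv> cutoff b x0 n"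
abbreviation "S \<equiv> B (2*n)"

definition "K u x = (1 / of_real (\<mu> x)) * (\<Sum>y\<in>N x. of_real (b x y) * (e x y * (of_real (ch x - ch y) * u y)))"
definition "M u x = (1 / of_real (\<mu> x)) * (\<Sum>y\<in>N x. of_real (b x y) * (e x y * (of_real ((ch x - ch y)^2) * u y)))"
definition "ut u y = (if y \<in> S then u y else 0)"

lemma np: "real n > 0" using n_ge by simp

lemma chi_ge0: "ch x \<ge> 0" by (simp add: cutoff_def)
lemma chi_le1: "ch x \<le> 1" by (simp add: cutoff_def)
lemma chi_far: "r x \<ge> 2*n \<Longrightarrow> ch x = 0"
  using np by (simp add: cutoff_def divide_le_0_iff)
lemma chi_out: "x \<notin> S \<Longrightarrow> ch x = 0"
  by (rule chi_far) (simp add: ball_comb_def)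

lemma chi_lip: assumes "b x y > 0" shows "\<bar>ch x - ch y\<bar> \<le> 1 / real n"
proof -
  have "\<bar>real (r x) - real (r y)\<bar> \<le> 1" using r_step[OF assms] r_step'[OF assms] by linarith
  then have "\<bar>real (r x) - real (r y)\<bar> / real n \<le> 1 / real n" using np by (simp add: divide_right_mono)
  then show ?thesis unfolding cutoff_def using cut_lip[OF n_ge, of "real (r x)" "real (r y)"] by linarith
qed

lemma key: assumes "b x y > 0" shows "\<bar>ch x - ch y\<bar> * cmod (u y) \<le> cmod (ut u y) / real n"
proof (cases "y \<in> S")
  case True
  then show ?thesis using chi_lip[OF assms] mult_right_mono[OF chi_lip[OF assms] norm_ge_zero[of "u y"]]
    by (simp add: ut_def)
next
  case False
  then have "r y > 2*n" by (simp add: ball_comb_def)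
  then have "r x \<ge> 2*n" using r_step'[OF assms] r_step[OF assms] by linarith
  then show ?thesis using False chi_far[of x] chi_out[of y] by (simp add: ut_def)
qed

lemma key2: assumes "b x y > 0" shows "(ch x - ch y)^2 * cmod (u y) \<le> cmod (ut u y) / (real n)^2"
proof -
  have "(ch x - ch y)^2 * cmod (u y) = \<bar>ch x - ch y\<bar> * (\<bar>ch x - ch y\<bar> * cmod (u y))"
    by (simp add: power2_eq_square abs_mult_self_eq)
  also have "\<dots> \<le> (1 / real n) * (cmod (ut u y) / real n)"
    using chi_lip[OF assms] key[OF assms] by (intro mult_mono) auto
  finally show ?thesis by (simp add: power2_eq_square)
qed

lemma nbr_far: assumes "x \<notin> S" "y \<in> N x" shows "ch y = 0"
proof -
  have "r x > 2*n" using assms by (simp add: ball_comb_def)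
  then show ?thesis using r_step'[of x y] assms(2) by (intro chi_far) (auto simp: N_iff)
qed

lemma K_out: "x \<notin> S \<Longrightarrow> K u x = 0"
  by (simp add: K_def chi_out nbr_far)
lemma M_out: "x \<notin> S \<Longrightarrow> M u x = 0"
  by (simp add: M_def chi_out nbr_far)

lemma P1: "L (\<lambda>x. of_real (ch x) * u x) x = of_real (ch x) * L u x + K u x"
proof -
  have "(\<Sum>y\<in>N x. of_real (b x y) * (of_real (ch x) * u x - e x y * (of_real (ch y) * u y)))
    = of_real (ch x) * (\<Sum>y\<in>N x. of_real (b x y) * (u x - e x y * u y))
      + (\<Sum>y\<in>N x. of_real (b x y) * (e x y * (of_real (ch x - ch y) * u y)))"
    unfolding sum_distrib_left sum.distrib[symmetric]
    by (intro sum.cong refl) (simp add: algebra_simps)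
  then show ?thesis unfolding L_alt' K_def by (simp add: algebra_simps)
qed

lemma P2: "L (\<lambda>x. of_real ((ch x)^2) * u x) x = of_real ((ch x)^2) * L u x + 2 * of_real (ch x) * K u x - M u x"
proof -
  have "(\<Sum>y\<in>N x. of_real (b x y) * (of_real ((ch x)^2) * u x - e x y * (of_real ((ch y)^2) * u y)))
    = of_real ((ch x)^2) * (\<Sum>y\<in>N x. of_real (b x y) * (u x - e x y * u y))
      + 2 * of_real (ch x) * (\<Sum>y\<in>N x. of_real (b x y) * (e x y * (of_real (ch x - ch y) * u y)))
      - (\<Sum>y\<in>N x. of_real (b x y) * (e x y * (of_real ((ch x - ch y)^2) * u y)))"
    unfolding sum_distrib_left sum.distrib[symmetric] sum_subtractf[symmetric]
    by (intro sum.cong refl) (simp add: algebra_simps power2_eq_square)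
  moreover have alg: "(1/m)*(a*p1 + 2*c*p2 - p3) = a*((1/m)*p1) + 2*c*((1/m)*p2) - (1/m)*p3" for m a c p1 p2 p3 :: complex
    by (simp add: algebra_simps)
  ultimately show ?thesis by (simp only: L_alt' K_def M_def alg)
qed

lemma Lv_out: "x \<notin> S \<Longrightarrow> L (\<lambda>x. of_real (ch x) * u x) x = 0"
  by (simp add: P1 chi_out K_out)

lemma K_bound: "cmod (K u x) \<le> (1 / \<mu> x) * ((1 / real n) * (\<Sum>y\<in>N x. b x y * cmod (ut u y)))"
proof -
  have "cmod (\<Sum>y\<in>N x. of_real (b x y) * (e x y * (of_real (ch x - ch y) * u y)))
     \<le> (\<Sum>y\<in>N x. cmod (of_real (b x y) * (e x y * (of_real (ch x - ch y) * u y))))" (is "cmod ?s \<le> _")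
    by (rule norm_sum)
  also have "\<dots> = (\<Sum>y\<in>N x. b x y * (\<bar>ch x - ch y\<bar> * cmod (u y)))"
    by (intro sum.cong refl) (simp del: of_real_diff of_real_power add: norm_mult e_norm b_nonneg)
  also have "\<dots> \<le> (\<Sum>y\<in>N x. b x y * (cmod (ut u y) / real n))"
    using key b_nonneg by (intro sum_mono mult_left_mono) (auto simp: N_iff)
  also have "\<dots> = (1 / real n) * (\<Sum>y\<in>N x. b x y * cmod (ut u y))"
    by (simp add: sum_distrib_left)
  finally have h: "cmod ?s \<le> (1 / real n) * (\<Sum>y\<in>N x. b x y * cmod (ut u y))" .
  have "cmod (K u x) = (1 / \<mu> x) * cmod ?s" using mu_pos[of x] by (simp add: K_def norm_mult norm_divide)
  also have "\<dots> \<le> (1 / \<mu> x) * ((1 / real n) * (\<Sum>y\<in>N x. b x y * cmod (ut u y)))"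
    using h mu_pos[of x] by (intro mult_left_mono) auto
  finally show ?thesis .
qed

lemma M_bound: "cmod (M u x) \<le> (1 / \<mu> x) * ((1 / (real n)^2) * (\<Sum>y\<in>N x. b x y * cmod (ut u y)))"
proof -
  have "cmod (\<Sum>y\<in>N x. of_real (b x y) * (e x y * (of_real ((ch x - ch y)^2) * u y)))
     \<le> (\<Sum>y\<in>N x. cmod (of_real (b x y) * (e x y * (of_real ((ch x - ch y)^2) * u y))))" (is "cmod ?s \<le> _")
    by (rule norm_sum)
  also have "\<dots> = (\<Sum>y\<in>N x. b x y * ((ch x - ch y)^2 * cmod (u y)))"
    by (intro sum.cong refl) (simp del: of_real_diff of_real_power add: norm_mult e_norm b_nonneg)
  also have "\<dots> \<le> (\<Sum>y\<in>N x. b x y * (cmod (ut u y) / (real n)^2))"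
    using key2 b_nonneg by (intro sum_mono mult_left_mono) (auto simp: N_iff)
  also have "\<dots> = (1 / (real n)^2) * (\<Sum>y\<in>N x. b x y * cmod (ut u y))"
    by (simp add: sum_distrib_left)
  finally have h: "cmod ?s \<le> (1 / (real n)^2) * (\<Sum>y\<in>N x. b x y * cmod (ut u y))" .
  have "cmod (M u x) = (1 / \<mu> x) * cmod ?s" using mu_pos[of x] by (simp add: M_def norm_mult norm_divide)
  also have "\<dots> \<le> (1 / \<mu> x) * ((1 / (real n)^2) * (\<Sum>y\<in>N x. b x y * cmod (ut u y)))"
    using h mu_pos[of x] by (intro mult_left_mono) auto
  finally show ?thesis .
qed

lemma L_bound: "cmod (L u x) \<le> (1 / \<mu> x) * (\<Sum>y\<in>N x. b x y * (cmod (u x) + cmod (u y)))"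
proof -
  have "cmod (\<Sum>y\<in>N x. of_real (b x y) * (u x - e x y * u y))
     \<le> (\<Sum>y\<in>N x. cmod (of_real (b x y) * (u x - e x y * u y)))" (is "cmod ?s \<le> _")
    by (rule norm_sum)
  also have "\<dots> \<le> (\<Sum>y\<in>N x. b x y * (cmod (u x) + cmod (u y)))"
  proof (intro sum_mono)
    fix y
    have "cmod (u x - e x y * u y) \<le> cmod (u x) + cmod (e x y * u y)" by (rule norm_triangle_ineq4)
    then have "cmod (u x - e x y * u y) \<le> cmod (u x) + cmod (u y)" by (simp add: norm_mult e_norm)
    then show "cmod (of_real (b x y) * (u x - e x y * u y)) \<le> b x y * (cmod (u x) + cmod (u y))"
      by (simp add: norm_mult b_nonneg mult_left_mono)
  qed
  finally have h: "cmod ?s \<le> (\<Sum>y\<in>N x. b x y * (cmod (u x) + cmod (u y)))" .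
  have "cmod (L u x) = (1 / \<mu> x) * cmod ?s" using mu_pos[of x] by (simp add: L_alt' norm_mult norm_divide)
  also have "\<dots> \<le> (1 / \<mu> x) * (\<Sum>y\<in>N x. b x y * (cmod (u x) + cmod (u y)))"
    using h mu_pos[of x] by (intro mult_left_mono) auto
  finally show ?thesis .
qed

end

context gsetting begin
definition "Bd k = real (dmax b x0 k) * pmax b x0 k"
lemma Bd_nonneg: "Bd k \<ge> 0" by (simp add: Bd_def pmax_nonneg)
lemma wsumB: "x \<in> B k \<Longrightarrow> finite F \<Longrightarrow> (\<Sum>y\<in>F. b x y) \<le> Bd k"
  unfolding Bd_def by (rule wsum)

lemma swap_bound:
  assumes "finite A" "finite F" "F \<subseteq> B k" "\<And>y. h y \<ge> 0"
  shows "(\<Sum>x\<in>A. \<Sum>y\<in>F. b x y * h y) \<le> Bd k * (\<Sum>y\<in>F. h y)"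
proof -
  have "(\<Sum>x\<in>A. \<Sum>y\<in>F. b x y * h y) = (\<Sum>y\<in>F. h y * (\<Sum>x\<in>A. b y x))"
    by (subst sum.swap) (simp add: sum_distrib_left b_sym mult.commute)
  also have "\<dots> \<le> (\<Sum>y\<in>F. h y * Bd k)"
    using assms by (intro sum_mono mult_left_mono wsumB) auto
  also have "\<dots> = Bd k * (\<Sum>y\<in>F. h y)"
    by (simp add: sum_distrib_right mult.commute)
  finally show ?thesis .
qed
end

context nsetting begin

abbreviation "S1 \<equiv> B (Suc (2*n))"
abbreviation "S2 \<equiv> B (Suc (Suc (2*n)))"

lemma SS1: "S \<subseteq> S1" by (auto simp: ball_comb_def)
lemma S1S2: "S1 \<subseteq> S2" by (auto simp: ball_comb_def)

lemma ident:
  "(\<Sum>x\<in>S1. \<mu> x * (cmod (L (\<lambda>x. of_real (ch x) * u x) x))^2)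
   = Re (\<Sum>x\<in>S1. of_real (\<mu> x) * L u x * cnj (L (\<lambda>x. of_real ((ch x)^2) * u x) x))
     + (\<Sum>x\<in>S1. \<mu> x * (cmod (K u x))^2) + (\<Sum>x\<in>S1. \<mu> x * Re (L u x * cnj (M u x)))"
proof -
  have pw: "m * (cmod (of_real c * w + k))^2 = m * Re (w * cnj (of_real (c^2) * w + 2 * of_real c * k - mm)) + m * (cmod k)^2 + m * Re (w * cnj mm)"
    for m c :: real and w k mm :: complex
    unfolding cmod_power2 by (simp add: algebra_simps power2_eq_square)
  have re: "Re (of_real m * w * cnj z) = m * Re (w * cnj z)" for m :: real and w z :: complex
    by (simp add: algebra_simps)
  show ?thesis
    unfolding P1 P2 Re_sum sum.distrib[symmetric]
    by (intro sum.cong refl) (simp only: pw re)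
qed

lemma green_app:
  "(\<Sum>x\<in>S1. of_real (\<mu> x) * L u x * cnj (L (\<lambda>x. of_real ((ch x)^2) * u x) x))
   = (\<Sum>x\<in>S. of_real (\<mu> x) * L (L u) x * cnj (of_real ((ch x)^2) * u x))"
  by (rule green[where T=S2]) (auto simp: B_finite SS1 S1S2 N_sub chi_out)

lemma P_sq: assumes "x \<in> S"
  shows "(\<Sum>y\<in>N x. b x y * cmod (ut u y))^2 \<le> Bd (2*n) * (\<Sum>y\<in>S. b x y * (cmod (u y))^2)"
proof -
  have "(\<Sum>y\<in>N x. b x y * cmod (ut u y))^2 \<le> (\<Sum>y\<in>N x. b x y) * (\<Sum>y\<in>N x. b x y * (cmod (ut u y))^2)"
    by (rule wCS) (simp add: b_nonneg)
  also have "\<dots> \<le> Bd (2*n) * (\<Sum>y\<in>N x. b x y * (cmod (ut u y))^2)"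
    using assms N_finite by (intro mult_right_mono wsumB sum_nonneg) (auto simp: b_nonneg)
  also have "(\<Sum>y\<in>N x. b x y * (cmod (ut u y))^2) = (\<Sum>y\<in>S. b x y * (cmod (u y))^2)"
  proof -
    have "(\<Sum>y\<in>N x. b x y * (cmod (ut u y))^2) = (\<Sum>y\<in>S. b x y * (cmod (ut u y))^2)"
      using N_finite B_finite by (intro sum_cong_sets) (auto simp: ut_def b_zero)
    also have "\<dots> = (\<Sum>y\<in>S. b x y * (cmod (u y))^2)" by (intro sum.cong refl) (simp add: ut_def)
    finally show ?thesis .
  qed
  finally show ?thesis .
qed

end

context nsetting begin

lemma inv_mu: "1 / \<mu> x \<le> 1 / \<mu>0"
  using mu0_pos mu_ge[of x] by (intro divide_left_mono) auto

lemma S_B: "S \<subseteq> B (2*n)" by simp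
lemma S1_B: "S1 \<subseteq> B (2 * Suc n)" by (auto simp: ball_comb_def)

lemma K_est: "(\<Sum>x\<in>S1. \<mu> x * (cmod (K u x))^2)
   \<le> (1/\<mu>0) * (1/(real n)^2) * Bd (2*n) * (Bd (2*n) * (\<Sum>y\<in>S. (cmod (u y))^2))"
proof -
  have "(\<Sum>x\<in>S1. \<mu> x * (cmod (K u x))^2) = (\<Sum>x\<in>S. \<mu> x * (cmod (K u x))^2)"
    using B_finite SS1 K_out by (intro sum.mono_neutral_right) auto
  also have "\<dots> \<le> (\<Sum>x\<in>S. (1/\<mu>0) * (1/(real n)^2) * Bd (2*n) * (\<Sum>y\<in>S. b x y * (cmod (u y))^2))"
  proof (rule sum_mono)
    fix x assume x: "x \<in> S"
    let ?P = "\<Sum>y\<in>N x. b x y * cmod (ut u y)"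
    have P0: "?P \<ge> 0" by (simp add: sum_nonneg b_nonneg)
    have "cmod (K u x) \<le> (1/\<mu> x) * ((1/real n) * ?P)" by (rule K_bound)
    then have "(cmod (K u x))^2 \<le> ((1/\<mu> x) * ((1/real n) * ?P))^2" by (intro power_mono) auto
    then have "\<mu> x * (cmod (K u x))^2 \<le> \<mu> x * ((1/\<mu> x) * ((1/real n) * ?P))^2"
      using mu_pos[of x] by (intro mult_left_mono) auto
    also have "\<dots> = (1/\<mu> x) * (1/(real n)^2) * ?P^2"
      using mu_pos[of x] by (simp add: power2_eq_square field_simps)
    also have "\<dots> \<le> (1/\<mu>0) * (1/(real n)^2) * ?P^2"
      using inv_mu[of x] by (intro mult_right_mono) auto
    also have "\<dots> \<le> (1/\<mu>0) * (1/(real n)^2) * (Bd (2*n) * (\<Sum>y\<in>S. b x y * (cmod (u y))^2))"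
      using P_sq[OF x] mu0_pos by (intro mult_left_mono) auto
    finally show "\<mu> x * (cmod (K u x))^2 \<le> (1/\<mu>0) * (1/(real n)^2) * Bd (2*n) * (\<Sum>y\<in>S. b x y * (cmod (u y))^2)"
      by (simp add: mult.assoc)
  qed
  also have "\<dots> = (1/\<mu>0) * (1/(real n)^2) * Bd (2*n) * (\<Sum>x\<in>S. \<Sum>y\<in>S. b x y * (cmod (u y))^2)"
    by (simp add: sum_distrib_left)
  also have "\<dots> \<le> (1/\<mu>0) * (1/(real n)^2) * Bd (2*n) * (Bd (2*n) * (\<Sum>y\<in>S. (cmod (u y))^2))"
    using mu0_pos Bd_nonneg[of "2*n"] B_finite
    by (intro mult_left_mono swap_bound) auto
  finally show ?thesis .
qed

lemma Mx: assumes x: "x \<in> S"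
  shows "\<mu> x * Re (L u x * cnj (M u x)) \<le> (1/\<mu>0) * (1/(real n)^2) * (1/2) *
     (Bd (2*n) * (\<Sum>y\<in>S. b x y * (cmod (u y))^2) + 2 * (Bd (2*n))^2 * (cmod (u x))^2
      + 2 * Bd (2*n) * (\<Sum>y\<in>S1. b x y * (cmod (u y))^2))"
proof -
  let ?P = "\<Sum>y\<in>N x. b x y * cmod (ut u y)"
  let ?Q = "\<Sum>y\<in>N x. b x y * (cmod (u x) + cmod (u y))"
  let ?D = "Bd (2*n)"
  have P0: "?P \<ge> 0" by (simp add: sum_nonneg b_nonneg)
  have Q0: "?Q \<ge> 0" by (simp add: sum_nonneg b_nonneg)
  have D0: "?D \<ge> 0" by (rule Bd_nonneg)
  have "\<mu> x * Re (L u x * cnj (M u x)) \<le> \<mu> x * (cmod (L u x) * cmod (M u x))"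
    using mu_pos[of x] complex_Re_le_cmod[of "L u x * cnj (M u x)"]
    by (intro mult_left_mono) (auto simp: norm_mult)
  also have "\<dots> \<le> \<mu> x * (((1/\<mu> x) * ?Q) * ((1/\<mu> x) * ((1/(real n)^2) * ?P)))"
    using mu_pos[of x] L_bound[of u x] M_bound[of u x] Q0
    by (intro mult_left_mono mult_mono) auto
  also have "\<dots> = (1/\<mu> x) * (1/(real n)^2) * (?P * ?Q)"
    using mu_pos[of x] by (simp add: field_simps power2_eq_square)
  also have "\<dots> \<le> (1/\<mu>0) * (1/(real n)^2) * (?P * ?Q)"
    using inv_mu[of x] P0 Q0 by (intro mult_right_mono) auto
  also have "\<dots> \<le> (1/\<mu>0) * (1/(real n)^2) * ((1/2) * (?P^2 + ?Q^2))"
  proof -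
    have "?P * ?Q \<le> (1/2) * (?P^2 + ?Q^2)"
      using sum_squares_ge_zero[of "?P - ?Q" 0] by (simp add: power2_eq_square algebra_simps)
    then show ?thesis using mu0_pos by (intro mult_left_mono) auto
  qed
  also have "\<dots> \<le> (1/\<mu>0) * (1/(real n)^2) * ((1/2) *
     (?D * (\<Sum>y\<in>S. b x y * (cmod (u y))^2) + 2 * ?D^2 * (cmod (u x))^2
      + 2 * ?D * (\<Sum>y\<in>S1. b x y * (cmod (u y))^2)))"
  proof -
    have WB: "(\<Sum>y\<in>N x. b x y) \<le> ?D" using x N_finite by (intro wsumB) auto
    have W0: "(\<Sum>y\<in>N x. b x y) \<ge> 0" by (simp add: sum_nonneg b_nonneg)
    have Qeq: "?Q = cmod (u x) * (\<Sum>y\<in>N x. b x y) + (\<Sum>y\<in>N x. b x y * cmod (u y))"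
      by (simp add: sum_distrib_left sum.distrib[symmetric] algebra_simps)
    have Q1: "(cmod (u x) * (\<Sum>y\<in>N x. b x y))^2 \<le> ?D^2 * (cmod (u x))^2"
      using WB W0 by (simp add: power_mult_distrib mult.commute mult_left_mono power_mono)
    have "(\<Sum>y\<in>N x. b x y * cmod (u y))^2 \<le> (\<Sum>y\<in>N x. b x y) * (\<Sum>y\<in>N x. b x y * (cmod (u y))^2)"
      by (rule wCS) (simp add: b_nonneg)
    also have "\<dots> \<le> ?D * (\<Sum>y\<in>N x. b x y * (cmod (u y))^2)"
      using WB by (intro mult_right_mono sum_nonneg) (auto simp: b_nonneg)
    also have "(\<Sum>y\<in>N x. b x y * (cmod (u y))^2) = (\<Sum>y\<in>S1. b x y * (cmod (u y))^2)"
      using x B_finite N_sub[OF x] by (intro nsum_real) auto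
    finally have Q2: "(\<Sum>y\<in>N x. b x y * cmod (u y))^2 \<le> ?D * (\<Sum>y\<in>S1. b x y * (cmod (u y))^2)" .
    have "?Q^2 \<le> 2 * (cmod (u x) * (\<Sum>y\<in>N x. b x y))^2 + 2 * (\<Sum>y\<in>N x. b x y * cmod (u y))^2"
      unfolding Qeq using sum_squares_ge_zero[of "cmod (u x) * (\<Sum>y\<in>N x. b x y) - (\<Sum>y\<in>N x. b x y * cmod (u y))" 0]
      by (simp add: power2_eq_square algebra_simps)
    then have Qsq: "?Q^2 \<le> 2 * ?D^2 * (cmod (u x))^2 + 2 * ?D * (\<Sum>y\<in>S1. b x y * (cmod (u y))^2)"
      using Q1 Q2 by linarith
    have "?P^2 + ?Q^2 \<le> ?D * (\<Sum>y\<in>S. b x y * (cmod (u y))^2) + 2 * ?D^2 * (cmod (u x))^2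
      + 2 * ?D * (\<Sum>y\<in>S1. b x y * (cmod (u y))^2)"
      using P_sq[OF x, of u] Qsq by linarith
    then show ?thesis using mu0_pos by (intro mult_left_mono) auto
  qed
  finally show ?thesis by (simp add: mult.assoc)
qed

lemma M_est: "(\<Sum>x\<in>S1. \<mu> x * Re (L u x * cnj (M u x)))
   \<le> (1/\<mu>0) * (1/(real n)^2) * (1/2) *
     (3 * (Bd (2*n))^2 * (\<Sum>y\<in>S. (cmod (u y))^2) + 2 * Bd (2*n) * Bd (2 * Suc n) * (\<Sum>y\<in>S1. (cmod (u y))^2))"
proof -
  let ?D = "Bd (2*n)"
  let ?c = "(1/\<mu>0) * (1/(real n)^2) * (1/2)"
  have c0: "?c \<ge> 0" using mu0_pos by simp
  have "(\<Sum>x\<in>S1. \<mu> x * Re (L u x * cnj (M u x))) = (\<Sum>x\<in>S. \<mu> x * Re (L u x * cnj (M u x)))"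
    using B_finite SS1 M_out by (intro sum.mono_neutral_right) auto
  also have "\<dots> \<le> (\<Sum>x\<in>S. ?c *
     (?D * (\<Sum>y\<in>S. b x y * (cmod (u y))^2) + 2 * ?D^2 * (cmod (u x))^2
      + 2 * ?D * (\<Sum>y\<in>S1. b x y * (cmod (u y))^2)))"
    by (intro sum_mono Mx)
  also have "\<dots> = ?c * (?D * (\<Sum>x\<in>S. \<Sum>y\<in>S. b x y * (cmod (u y))^2) + 2 * ?D^2 * (\<Sum>x\<in>S. (cmod (u x))^2)
      + 2 * ?D * (\<Sum>x\<in>S. \<Sum>y\<in>S1. b x y * (cmod (u y))^2))"
    by (simp only: sum.distrib sum_distrib_left[symmetric])
  also have "\<dots> \<le> ?c * (?D * (?D * (\<Sum>y\<in>S. (cmod (u y))^2)) + 2 * ?D^2 * (\<Sum>x\<in>S. (cmod (u x))^2)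
      + 2 * ?D * (Bd (2 * Suc n) * (\<Sum>y\<in>S1. (cmod (u y))^2)))"
  proof -
    have a: "(\<Sum>x\<in>S. \<Sum>y\<in>S. b x y * (cmod (u y))^2) \<le> ?D * (\<Sum>y\<in>S. (cmod (u y))^2)"
      using B_finite by (intro swap_bound) auto
    have c: "(\<Sum>x\<in>S. \<Sum>y\<in>S1. b x y * (cmod (u y))^2) \<le> Bd (2 * Suc n) * (\<Sum>y\<in>S1. (cmod (u y))^2)"
      using B_finite S1_B by (intro swap_bound) auto
    have D0: "?D \<ge> 0" by (rule Bd_nonneg)
    show ?thesis using a c D0 c0
      by (intro mult_left_mono add_mono order_refl) auto
  qed
  also have "\<dots> = ?c * (3 * ?D^2 * (\<Sum>y\<in>S. (cmod (u y))^2) + 2 * ?D * Bd (2 * Suc n) * (\<Sum>y\<in>S1. (cmod (u y))^2))"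
    by (simp add: power2_eq_square algebra_simps)
  finally show ?thesis .
qed

end

context nsetting begin

lemma final_n:
  assumes eig: "\<And>x. L (L u) x = (of_real lam * \<i> - of_real (W x)) * u x"
    and Wl: "\<And>x. W x \<ge> - q (real (r x))"
  shows "(\<Sum>x\<in>S1. \<mu> x * (cmod (L (\<lambda>x. of_real (ch x) * u x) x))^2)
     \<le> (\<Sum>x\<in>S. \<mu> x * q (real (r x)) * (ch x)^2 * (cmod (u x))^2)
       + (1/\<mu>0) * (1/(real n)^2) * Bd (2*n) * (Bd (2*n) * (\<Sum>y\<in>S. (cmod (u y))^2))
       + (1/\<mu>0) * (1/(real n)^2) * (1/2) *
     (3 * (Bd (2*n))^2 * (\<Sum>y\<in>S. (cmod (u y))^2) + 2 * Bd (2*n) * Bd (2 * Suc n) * (\<Sum>y\<in>S1. (cmod (u y))^2))"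
proof -
  have "Re (\<Sum>x\<in>S1. of_real (\<mu> x) * L u x * cnj (L (\<lambda>x. of_real ((ch x)^2) * u x) x))
     = Re (\<Sum>x\<in>S. of_real (\<mu> x) * L (L u) x * cnj (of_real ((ch x)^2) * u x))"
    by (simp only: green_app)
  also have "\<dots> = (\<Sum>x\<in>S. \<mu> x * (- W x) * (ch x)^2 * (cmod (u x))^2)"
    unfolding Re_sum
  proof (rule sum.cong[OF refl])
    fix x
    show "Re (of_real (\<mu> x) * L (L u) x * cnj (of_real ((ch x)^2) * u x)) = \<mu> x * (- W x) * (ch x)^2 * (cmod (u x))^2"
      unfolding eig cmod_power2 by (simp add: algebra_simps power2_eq_square)
  qed
  also have "\<dots> \<le> (\<Sum>x\<in>S. \<mu> x * q (real (r x)) * (ch x)^2 * (cmod (u x))^2)"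
  proof (rule sum_mono)
    fix x
    have "0 \<le> \<mu> x" using mu_pos[of x] by simp
    then show "\<mu> x * (- W x) * (ch x)^2 * (cmod (u x))^2 \<le> \<mu> x * q (real (r x)) * (ch x)^2 * (cmod (u x))^2"
      using Wl[of x] by (intro mult_right_mono mult_left_mono) auto
  qed
  finally have R: "Re (\<Sum>x\<in>S1. of_real (\<mu> x) * L u x * cnj (L (\<lambda>x. of_real ((ch x)^2) * u x) x))
     \<le> (\<Sum>x\<in>S. \<mu> x * q (real (r x)) * (ch x)^2 * (cmod (u x))^2)" .
  show ?thesis unfolding ident using R K_est[of u] M_est[of u] by linarith
qed

end

lemma arith5:
  fixes \<mu>0 nn D D1 VS V U Nu \<beta> Rq LL :: real
  assumes "\<mu>0 > 0" "nn > 0" "D \<ge> 0" "D1 \<le> 2 * \<mu>0 * nn" "0 \<le> VS" "VS \<le> V" "\<mu>0 * V \<le> U" "U \<le> Nu"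
    "\<beta> = D / (\<mu>0 * nn)" "\<beta> \<le> 1" "Rq \<ge> 0"
    "LL \<le> Rq + (1/\<mu>0) * (1/nn^2) * D * (D * VS) + (1/\<mu>0) * (1/nn^2) * (1/2) * (3 * D^2 * VS + 2 * D * D1 * V)"
  shows "LL \<le> 5 * (\<beta> * Nu + Rq)"
proof -
  have D: "D = \<beta> * \<mu>0 * nn" using assms by (simp add: field_simps)
  have b0: "\<beta> \<ge> 0" using assms by simp
  have V0: "V \<ge> 0" using assms by linarith
  have t1: "(1/\<mu>0) * (1/nn^2) * D * (D * VS) = \<beta>^2 * (\<mu>0 * VS)"
    using assms unfolding D by (simp add: field_simps power2_eq_square)
  have t2: "(1/\<mu>0) * (1/nn^2) * (1/2) * (3 * D^2 * VS + 2 * D * D1 * V) = (3/2) * (\<beta>^2 * (\<mu>0 * VS)) + \<beta> * (D1 / nn) * V"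
    using assms unfolding D by (simp add: field_simps power2_eq_square)
  have muVS: "\<mu>0 * VS \<le> Nu" using assms by (meson mult_left_mono less_imp_le order_trans)
  have bb: "\<beta>^2 \<le> \<beta>" using b0 assms(10) unfolding power2_eq_square by (metis mult_left_le_one_le)
  have "\<beta>^2 * (\<mu>0 * VS) \<le> \<beta> * Nu"
    using bb muVS b0 assms by (meson mult_mono zero_le_mult_iff less_imp_le order_trans zero_le_power2)
  moreover have "(D1 / nn) * V \<le> 2 * Nu"
  proof -
    have "D1 / nn \<le> 2 * \<mu>0" using assms by (simp add: divide_le_eq mult.commute mult.left_commute)
    then have "(D1 / nn) * V \<le> 2 * \<mu>0 * V" using V0 by (intro mult_right_mono) auto
    also have "\<dots> \<le> 2 * Nu" using assms by linarith
    finally show ?thesis .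
  qed
  then have "\<beta> * ((D1 / nn) * V) \<le> \<beta> * (2 * Nu)" using b0 by (intro mult_left_mono) auto
  then have "\<beta> * (D1 / nn) * V \<le> 2 * (\<beta> * Nu)" by (simp add: mult.assoc mult.left_commute)
  moreover have L2: "LL \<le> Rq + \<beta>^2 * (\<mu>0 * VS) + ((3/2) * (\<beta>^2 * (\<mu>0 * VS)) + \<beta> * (D1 / nn) * V)"
    using assms(12) unfolding t1 t2 .
  moreover have "\<beta> * Nu \<ge> 0" using b0 muVS assms by (meson mult_nonneg_nonneg less_imp_le mult_nonneg_nonneg order_trans)
  ultimately show ?thesis using assms(11) by (simp only: distrib_left)
qed

theorem proposition5p5:
  fixes b \<theta> :: "'v \<Rightarrow> 'v \<Rightarrow> real" and \<mu> :: "'v \<Rightarrow> real" and \<mu>0 :: real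
    and x0 :: 'v and q :: "real \<Rightarrow> real" and \<alpha> :: real and W :: "'v \<Rightarrow> real"
    and C1 :: real and N1 :: nat and u :: "'v \<Rightarrow> complex" and lam :: real
  assumes V_countable: "countable (UNIV :: 'v set)"
    and V_infinite: "infinite (UNIV :: 'v set)"
    and graph: "weighted_graph b"
    and conn: "graph_connected b"
    and mu0_pos: "\<mu>0 > 0"
    and mu_ge: "\<forall>x. \<mu> x \<ge> \<mu>0"
    and phase: "phase_function \<theta>"
    and q_pos: "\<forall>s\<ge>0. q s > 0"
    and q_mono: "mono_on {0..} q"
    and alpha: "0 \<le> \<alpha>" "\<alpha> \<le> 1"
    and q_growth: "q \<in> O(\<lambda>s. s powr \<alpha>)"
    and W_lower: "\<forall>x. W x \<ge> - q (real (gdist b x0 x))"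
    and C1: "0 < C1" "C1 < 1"
    and N1: "N1 \<ge> 1"
    and beta_le: "\<forall>n\<ge>N1. beta b \<mu>0 x0 n \<le> C1"
    and u_l2: "in_l2 \<mu> u"
    and Hu_l2: "in_l2 \<mu> (\<lambda>x. mag_lap b \<theta> \<mu> (mag_lap b \<theta> \<mu> u) x + complex_of_real (W x) * u x)"
    and eigen: "\<forall>x. mag_lap b \<theta> \<mu> (mag_lap b \<theta> \<mu> u) x + complex_of_real (W x) * u x
                    - complex_of_real lam * \<i> * u x = 0"
  shows "\<exists>C. \<forall>n\<ge>N1.
     l2_norm_sq \<mu> (mag_lap b \<theta> \<mu> (\<lambda>x. complex_of_real (cutoff b x0 n x) * u x))
       \<le> C * (beta b \<mu>0 x0 n * l2_norm_sq \<mu> u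
              + Re (l2_inner \<mu>
                      (\<lambda>x. complex_of_real (q (real (gdist b x0 x)) * cutoff b x0 n x) * u x)
                      (\<lambda>x. complex_of_real (cutoff b x0 n x) * u x)))"
proof -
  interpret gsetting b x0 using graph conn by unfold_locales
  have eig: "mag_lap b \<theta> \<mu> (mag_lap b \<theta> \<mu> u) x = (of_real lam * \<i> - of_real (W x)) * u x" for x
  proof -
    have "mag_lap b \<theta> \<mu> (mag_lap b \<theta> \<mu> u) x + complex_of_real (W x) * u x
                    - complex_of_real lam * \<i> * u x = 0" using eigen by blast
    then show ?thesis by (simp add: algebra_simps eq_iff_diff_eq_0[symmetric])
  qed
  show ?thesis
  proof (rule exI[of _ 5], intro allI impI)
    fix n assume n: "N1 \<le> n"
    interpret nsetting b x0 \<theta> \<mu> \<mu>0 n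
      using graph conn mu0_pos mu_ge phase n N1 by unfold_locales auto
    let ?v = "\<lambda>x. complex_of_real (ch x) * u x"
    have LHS: "l2_norm_sq \<mu> (L ?v) = (\<Sum>x\<in>S1. \<mu> x * (cmod (L ?v x))^2)"
    proof -
      have "l2_norm_sq \<mu> (L ?v) = infsum (\<lambda>x. \<mu> x * (cmod (L ?v x))^2) S1"
        unfolding l2_norm_sq_def
        by (rule infsum_cong_neutral) (use SS1 Lv_out in auto)
      then show ?thesis using B_finite by (simp add: infsum_finite)
    qed
    have RQ: "Re (l2_inner \<mu> (\<lambda>x. complex_of_real (q (real (r x)) * ch x) * u x) ?v)
        = (\<Sum>x\<in>S. \<mu> x * q (real (r x)) * (ch x)^2 * (cmod (u x))^2)"
    proof -
      have "l2_inner \<mu> (\<lambda>x. complex_of_real (q (real (r x)) * ch x) * u x) ?v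
          = infsum (\<lambda>x. complex_of_real (\<mu> x) * (complex_of_real (q (real (r x)) * ch x) * u x) * cnj (?v x)) S"
        unfolding l2_inner_def
        by (rule infsum_cong_neutral) (use chi_out in auto)
      also have "\<dots> = (\<Sum>x\<in>S. complex_of_real (\<mu> x) * (complex_of_real (q (real (r x)) * ch x) * u x) * cnj (?v x))"
        using B_finite by (simp add: infsum_finite)
      finally have eq: "l2_inner \<mu> (\<lambda>x. complex_of_real (q (real (r x)) * ch x) * u x) ?v
          = (\<Sum>x\<in>S. complex_of_real (\<mu> x) * (complex_of_real (q (real (r x)) * ch x) * u x) * cnj (?v x))" .
      show ?thesis unfolding eq Re_sum
      proof (rule sum.cong[OF refl])
        fix x
        show "Re (complex_of_real (\<mu> x) * (complex_of_real (q (real (r x)) * ch x) * u x) * cnj (?v x))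
          = \<mu> x * q (real (r x)) * (ch x)^2 * (cmod (u x))^2"
          unfolding cmod_power2 by (simp add: algebra_simps power2_eq_square)
      qed
    qed
    have Rq0: "(\<Sum>x\<in>S. \<mu> x * q (real (r x)) * (ch x)^2 * (cmod (u x))^2) \<ge> 0"
    proof (intro sum_nonneg)
      fix x
      have "q (real (r x)) > 0" using q_pos by simp
      then show "0 \<le> \<mu> x * q (real (r x)) * (ch x)^2 * (cmod (u x))^2"
        using mu_pos[of x] by simp
    qed
    have U: "(\<Sum>x\<in>S1. \<mu> x * (cmod (u x))^2) \<le> l2_norm_sq \<mu> u"
      unfolding l2_norm_sq_def using u_l2 B_finite mu_pos
      by (intro finite_sum_le_infsum) (auto simp: in_l2_def less_imp_le)
    have VS: "(\<Sum>y\<in>S. (cmod (u y))^2) \<le> (\<Sum>y\<in>S1. (cmod (u y))^2)"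
      using B_finite SS1 by (intro sum_mono2) auto
    have muV: "\<mu>0 * (\<Sum>y\<in>S1. (cmod (u y))^2) \<le> (\<Sum>x\<in>S1. \<mu> x * (cmod (u x))^2)"
      unfolding sum_distrib_left using mu_ge by (intro sum_mono mult_right_mono) auto
    have beta_eq: "beta b \<mu>0 x0 n = Bd (2*n) / (\<mu>0 * real n)"
      by (simp add: beta_def Bd_def)
    have D1: "Bd (2 * Suc n) \<le> 2 * \<mu>0 * real n"
    proof -
      have "beta b \<mu>0 x0 (Suc n) \<le> C1" using beta_le n by auto
      then have "Bd (2 * Suc n) / (\<mu>0 * real (Suc n)) \<le> 1" using C1 by (simp add: beta_def Bd_def)
      then have "Bd (2 * Suc n) \<le> \<mu>0 * real (Suc n)" using mu0_pos by (simp add: divide_le_eq)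
      also have "\<dots> \<le> 2 * \<mu>0 * real n" using mu0_pos n N1 by simp
      finally show ?thesis .
    qed
    have b1: "beta b \<mu>0 x0 n \<le> 1" using beta_le n C1 by force
    show "l2_norm_sq \<mu> (L ?v) \<le> 5 * (beta b \<mu>0 x0 n * l2_norm_sq \<mu> u
          + Re (l2_inner \<mu> (\<lambda>x. complex_of_real (q (real (r x)) * ch x) * u x) ?v))"
      unfolding RQ
    proof (rule arith5[OF mu0_pos np Bd_nonneg D1 sum_nonneg VS muV U beta_eq b1 Rq0])
      show "\<And>x. x \<in> S \<Longrightarrow> 0 \<le> (cmod (u x))^2" by simp
      show "l2_norm_sq \<mu> (L ?v) \<le> (\<Sum>x\<in>S. \<mu> x * q (real (r x)) * (ch x)^2 * (cmod (u x))^2)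
        + (1/\<mu>0) * (1/(real n)^2) * Bd (2*n) * (Bd (2*n) * (\<Sum>y\<in>S. (cmod (u y))^2))
        + (1/\<mu>0) * (1/(real n)^2) * (1/2) * (3 * (Bd (2*n))^2 * (\<Sum>y\<in>S. (cmod (u y))^2)
           + 2 * Bd (2*n) * Bd (2 * Suc n) * (\<Sum>y\<in>S1. (cmod (u y))^2))"
        unfolding LHS by (rule final_n[OF eig]) (use W_lower in auto)
    qed
  qed
qed

end
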